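(* Let $K$ be a field of characteristic zero, $x=(x_1,\dots,x_n)$, and let $F\in K[x]^n$ be a Keller map such that $\mathcal{J}F$ is symmetric. If for some index $i$, $F_i=c'x_i+x_i^2h+c$ for some $c,c'\in K$ and $h\in K[x]$, then $h=0$.
   Context: A Keller map is a polynomial map $F\in K[x]^n$ with $\det\mathcal{J}F\in K^{*}$, $\mathcal{J}$ the Jacobian matrix. *)

theory Defs
  imports "HOL-Library.Poly_Mapping" "Jordan_Normal_Form.Determinant"
begin

text \<open>K[x_1..x_n] is represented by the
  polynomials whose monomials only involve the variables x_0, ..., x_(n-1).\<close>

type_synonym 'a mpoly = "(nat \<Rightarrow>\<^sub>0 nat) \<Rightarrow>\<^sub>0 'a"

definition in_Kx :: "nat \<Rightarrow> 'a::zero mpoly \<Rightarrow> bool" where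
  "in_Kx n p \<longleftrightarrow> (\<forall>m \<in> Poly_Mapping.keys p. Poly_Mapping.keys m \<subseteq> {..<n})"

definition mvar :: "nat \<Rightarrow> 'a::{zero,one} mpoly" where
  "mvar i = Poly_Mapping.single (Poly_Mapping.single i 1) 1"

definition mconst :: "'a::zero \<Rightarrow> 'a mpoly" where
  "mconst c = Poly_Mapping.single 0 c"

definition mderiv :: "nat \<Rightarrow> 'a::semiring_1 mpoly \<Rightarrow> 'a mpoly" where
  "mderiv j p = Abs_poly_mapping
     (\<lambda>m::nat \<Rightarrow>\<^sub>0 nat. of_nat (Poly_Mapping.lookup m j + 1) * Poly_Mapping.lookup p (m + Poly_Mapping.single j 1))"

definition jacobian :: "nat \<Rightarrow> (nat \<Rightarrow> 'a::comm_ring_1 mpoly) \<Rightarrow> 'a mpoly mat" where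
  "jacobian n F = mat n n (\<lambda>(i, j). mderiv j (F i))"

definition keller_map :: "nat \<Rightarrow> (nat \<Rightarrow> 'a::field mpoly) \<Rightarrow> bool" where
  "keller_map n F \<longleftrightarrow> (\<forall>i<n. in_Kx n (F i)) \<and>
     (\<exists>c. c \<noteq> 0 \<and> det (jacobian n F) = mconst c)"

end

theory Submission
  imports Defs
begin

abbreviation "lk \<equiv> Poly_Mapping.lookup"

lemma lookup_single_mult:
  fixes p :: "'a::comm_semiring_1 mpoly"
  shows "lk (Poly_Mapping.single s v * p) (s + m) = v * lk p m"
proof -
  have "lk (Poly_Mapping.single s v * p) (s + m) = (\<Sum>l. lk (Poly_Mapping.single s v) l * (\<Sum>q. lk p q when s + m = l + q))"
    by (rule lookup_mult)
  also have "\<dots> = (\<Sum>l. (v * (\<Sum>q. lk p q when s + m = l + q)) when l = s)"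
    by (rule Sum_any.cong) (auto simp: lookup_single when_def)
  also have "\<dots> = v * (\<Sum>q. lk p q when s + m = s + q)" by simp
  also have "(\<Sum>q. lk p q when s + m = s + q) = (\<Sum>q. lk p q when q = m)"
    by (rule Sum_any.cong) (auto simp: when_def)
  also have "\<dots> = lk p m" by simp
  finally show ?thesis .
qed

lemma lookup_mderiv:
  "lk (mderiv j p) m = of_nat (lk m j + 1) * lk p (m + Poly_Mapping.single j 1)"
proof -
  have "{m. of_nat (lk m j + 1) * lk p (m + Poly_Mapping.single j 1) \<noteq> (0::'a)}
     \<subseteq> (\<lambda>m. m + Poly_Mapping.single j 1) -` {k. lk p k \<noteq> 0}" by auto
  moreover have "finite ((\<lambda>m. m + Poly_Mapping.single j (1::nat)) -` {k. lk p k \<noteq> 0})"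
    by (rule finite_vimageI) (auto simp: inj_def)
  ultimately show ?thesis unfolding mderiv_def
    by (subst lookup_Abs_poly_mapping) (auto intro: finite_subset)
qed

lemma lookup_plus_single: "lk (m + Poly_Mapping.single j (v::nat)) k = lk m k + (if j = k then v else 0)"
  by (simp add: lookup_add lookup_single when_def)

definition Ig :: "nat \<Rightarrow> nat \<Rightarrow> 'a::zero mpoly set" where
  "Ig i d = {p. \<forall>m. lk m i < d \<longrightarrow> lk p m = 0}"

lemma Ig_zero[simp]: "0 \<in> Ig i d" by (simp add: Ig_def)
lemma Ig_add: "p \<in> Ig i d \<Longrightarrow> q \<in> Ig i d \<Longrightarrow> (p::'a::comm_ring_1 mpoly) + q \<in> Ig i d"
  by (simp add: Ig_def lookup_add)
lemma Ig_diff: "p \<in> Ig i d \<Longrightarrow> q \<in> Ig i d \<Longrightarrow> (p::'a::comm_ring_1 mpoly) - q \<in> Ig i d"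
  by (simp add: Ig_def lookup_minus)
lemma Ig_mono: "d \<le> d' \<Longrightarrow> p \<in> Ig i d' \<Longrightarrow> p \<in> Ig i d"
  by (auto simp: Ig_def)
lemma Ig_mult: "p \<in> Ig i a \<Longrightarrow> q \<in> Ig i b \<Longrightarrow> (p::'a::comm_ring_1 mpoly) * q \<in> Ig i (a + b)"
proof -
  assume p: "p \<in> Ig i a" and q: "q \<in> Ig i b"
  show ?thesis unfolding Ig_def
  proof (intro CollectI allI impI)
    fix m assume m: "lk m i < a + b"
    show "lk (p * q) m = 0"
    proof (rule ccontr)
      assume "lk (p * q) m \<noteq> 0"
      hence "m \<in> Poly_Mapping.keys (p * q)" by (simp add: in_keys_iff)
      then obtain x y where xy: "m = x + y" "x \<in> Poly_Mapping.keys p" "y \<in> Poly_Mapping.keys q"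
        using keys_mult by blast
      have "a \<le> lk x i" using p xy(2) by (force simp: Ig_def in_keys_iff)
      moreover have "b \<le> lk y i" using q xy(3) by (force simp: Ig_def in_keys_iff)
      ultimately show False using m xy(1) by (simp add: lookup_add)
    qed
  qed
qed
lemma Ig_multL: "p \<in> Ig i d \<Longrightarrow> (q::'a::comm_ring_1 mpoly) * p \<in> Ig i d"
  using Ig_mult[of q i 0 p d] by (simp add: Ig_def)

lemma Ig_prod_diff:
  fixes f g :: "'b \<Rightarrow> 'a::comm_ring_1 mpoly"
  assumes "finite S" "\<forall>x\<in>S. f x - g x \<in> Ig i d"
  shows "prod f S - prod g S \<in> Ig i d"
  using assms
proof (induction S rule: finite_induct)
  case empty then show ?case by simp
next
  case (insert x S)
  have "prod f (insert x S) - prod g (insert x S) = (f x - g x) * prod f S + g x * (prod f S - prod g S)"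
    using insert by (simp add: algebra_simps)
  then show ?case using insert
    by (metis Ig_add Ig_multL insertCI mult.commute)
qed

lemma Ig_sum:
  fixes f :: "'b \<Rightarrow> 'a::comm_ring_1 mpoly"
  assumes "finite S" "\<forall>x\<in>S. f x \<in> Ig i d"
  shows "sum f S \<in> Ig i d"
  using assms by (induction S rule: finite_induct) (auto intro: Ig_add)

lemma det_cong:
  fixes A B :: "'a::comm_ring_1 mpoly mat"
  assumes A: "A \<in> carrier_mat n n" and B: "B \<in> carrier_mat n n"
    and e: "\<And>r s. r < n \<Longrightarrow> s < n \<Longrightarrow> A $$ (r,s) - B $$ (r,s) \<in> Ig i d"
  shows "det A - det B \<in> Ig i d"
proof -
  have "det A - det B = (\<Sum>p\<in>{p. p permutes {0..<n}}. signof p * ((\<Prod>r = 0..<n. A $$ (r, p r)) - (\<Prod>r = 0..<n. B $$ (r, p r))))"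
    using A B unfolding det_def by (simp add: sum_subtractf[symmetric] right_diff_distrib)
  also have "\<dots> \<in> Ig i d"
  proof (rule Ig_sum)
    show "finite {p. p permutes {0..<n}}" by (simp add: finite_permutations)
    show "\<forall>x\<in>{p. p permutes {0..<n}}. signof x * ((\<Prod>r = 0..<n. A $$ (r, x r)) - (\<Prod>r = 0..<n. B $$ (r, x r))) \<in> Ig i d"
    proof
      fix p assume "p \<in> {p. p permutes {0..<n}}"
      hence "\<forall>r\<in>{0..<n}. p r < n" by (auto dest: permutes_in_image)
      hence "(\<Prod>r = 0..<n. A $$ (r, p r)) - (\<Prod>r = 0..<n. B $$ (r, p r)) \<in> Ig i d"
        by (intro Ig_prod_diff) (auto intro: e)
      thus "signof p * ((\<Prod>r = 0..<n. A $$ (r, p r)) - (\<Prod>r = 0..<n. B $$ (r, p r))) \<in> Ig i d"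
        by (rule Ig_multL)
    qed
  qed
  finally show ?thesis .
qed

definition Free :: "nat \<Rightarrow> 'a::zero mpoly \<Rightarrow> bool" where
  "Free i p \<longleftrightarrow> (\<forall>m. lk m i \<noteq> 0 \<longrightarrow> lk p m = 0)"

definition P0 :: "nat \<Rightarrow> 'a::zero mpoly \<Rightarrow> 'a mpoly" where
  "P0 i p = Abs_poly_mapping (\<lambda>m. if lk m i = 0 then lk p m else 0)"

lemma lookup_P0: "lk (P0 i p) m = (if lk m i = 0 then lk p m else 0)"
proof -
  have "{m. (if lk m i = 0 then lk p m else 0) \<noteq> 0} \<subseteq> {m. lk p m \<noteq> 0}" by auto
  then show ?thesis unfolding P0_def by (subst lookup_Abs_poly_mapping) (auto intro: finite_subset)
qed

lemma Free_P0: "Free i (P0 i p)" by (simp add: Free_def lookup_P0)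
lemma P0_diff: "(p::'a::comm_ring_1 mpoly) - P0 i p \<in> Ig i 1"
  by (simp add: Ig_def lookup_minus lookup_P0)
lemma Free_Ig_zero: "Free i q \<Longrightarrow> q \<in> Ig i 1 \<Longrightarrow> q = 0"
  by (rule poly_mapping_eqI) (auto simp: Free_def Ig_def)
lemma P0_unique:
  fixes p q :: "'a::comm_ring_1 mpoly"
  assumes "Free i q" "p - q \<in> Ig i 1" shows "P0 i p = q"
proof -
  have "P0 i p - q = (P0 i p - p) + (p - q)" by simp
  also have "\<dots> \<in> Ig i 1"
  proof (rule Ig_add)
    have "0 - (p - P0 i p) \<in> Ig i 1" by (rule Ig_diff[OF Ig_zero P0_diff])
    thus "P0 i p - p \<in> Ig i 1" by simp
  qed (rule assms(2))
  finally have "P0 i p - q \<in> Ig i 1" .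
  moreover have "Free i (P0 i p - q)" using assms(1) Free_P0[of i p]
    by (simp add: Free_def lookup_minus)
  ultimately show ?thesis using Free_Ig_zero by fastforce
qed
lemma Free_mult:
  fixes p q :: "'a::comm_ring_1 mpoly"
  assumes p: "Free i p" and q: "Free i q" shows "Free i (p * q)"
  unfolding Free_def
proof (intro allI impI)
  fix m :: "nat \<Rightarrow>\<^sub>0 nat" assume m: "lk m i \<noteq> 0"
  show "lk (p * q) m = 0"
  proof (rule ccontr)
    assume "lk (p * q) m \<noteq> 0"
    hence "m \<in> Poly_Mapping.keys (p * q)" by (simp add: in_keys_iff)
    then obtain x y where xy: "m = x + y" "x \<in> Poly_Mapping.keys p" "y \<in> Poly_Mapping.keys q"
      using keys_mult by blast
    have "lk x i = 0" using p xy(2) by (force simp: Free_def in_keys_iff)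
    moreover have "lk y i = 0" using q xy(3) by (force simp: Free_def in_keys_iff)
    ultimately show False using m xy(1) by (simp add: lookup_add)
  qed
qed
lemma P0_cong: "(p::'a::comm_ring_1 mpoly) - q \<in> Ig i 1 \<Longrightarrow> P0 i p = P0 i q"
proof -
  assume a: "p - q \<in> Ig i 1"
  have "p - P0 i q = (p - q) + (q - P0 i q)" by simp
  also have "\<dots> \<in> Ig i 1" using a P0_diff by (rule Ig_add)
  finally show ?thesis by (intro P0_unique Free_P0)
qed
lemma P0_mult: "P0 i ((p::'a::comm_ring_1 mpoly) * q) = P0 i p * P0 i q"
proof (rule P0_unique)
  show "Free i (P0 i p * P0 i q)" by (intro Free_mult Free_P0)
  have "p * q - P0 i p * P0 i q = q * (p - P0 i p) + P0 i p * (q - P0 i q)" by (simp add: algebra_simps)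
  also have "\<dots> \<in> Ig i 1" by (intro Ig_add Ig_multL P0_diff)
  finally show "p * q - P0 i p * P0 i q \<in> Ig i 1" .
qed
lemma P0_add: "P0 i ((p::'a::comm_ring_1 mpoly) + q) = P0 i p + P0 i q"
  by (rule poly_mapping_eqI) (simp add: lookup_P0 lookup_add)
lemma P0_one: "P0 i (1::'a::comm_ring_1 mpoly) = 1"
  by (rule P0_unique) (auto simp: Free_def lookup_one when_def)
lemma P0_free: "Free i (p::'a::comm_ring_1 mpoly) \<Longrightarrow> P0 i p = p"
  by (rule P0_unique) auto

lemma P0_zero: "P0 i (0::'a::comm_ring_1 mpoly) = 0"
  by (rule poly_mapping_eqI) (simp add: lookup_P0)

lemma P0_hom: "comm_ring_hom (P0 i :: 'a::comm_ring_1 mpoly \<Rightarrow> 'a mpoly)"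
  apply unfold_locales
  apply (rule P0_zero)
  apply (rule P0_add)
  apply (rule P0_one)
  apply (rule P0_mult)
  done

lemma mderiv_add: "mderiv j (p + q) = mderiv j p + mderiv j (q::'a::comm_ring_1 mpoly)"
  by (rule poly_mapping_eqI) (simp add: lookup_mderiv lookup_add distrib_left)

lemma mderiv_comm: "mderiv j (mderiv k p) = mderiv k (mderiv j (p::'a::comm_ring_1 mpoly))"
proof (rule poly_mapping_eqI)
  fix m
  show "lk (mderiv j (mderiv k p)) m = lk (mderiv k (mderiv j p)) m"
  proof (cases "j = k")
    case True then show ?thesis by simp
  next
    case False
    then show ?thesis
      by (simp add: lookup_mderiv lookup_plus_single add.commute add.left_commute mult_ac)
  qed
qed

lemma mderiv_Ig: "j \<noteq> i \<Longrightarrow> p \<in> Ig i d \<Longrightarrow> mderiv j (p::'a::comm_ring_1 mpoly) \<in> Ig i d"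
  by (simp add: Ig_def lookup_mderiv lookup_plus_single)

lemma mderiv_Ig_i: "p \<in> Ig i (Suc d) \<Longrightarrow> mderiv i (p::'a::comm_ring_1 mpoly) \<in> Ig i d"
  by (simp add: Ig_def lookup_mderiv lookup_plus_single)

lemma lookup_mconst: "lk (mconst c) m = (if m = 0 then c else 0)"
  by (simp add: mconst_def lookup_single when_def)

lemma mderiv_const: "mderiv j (mconst c :: 'a::comm_ring_1 mpoly) = 0"
proof (rule poly_mapping_eqI)
  fix m :: "nat \<Rightarrow>\<^sub>0 nat"
  have "m + Poly_Mapping.single j 1 \<noteq> 0"
  proof
    assume "m + Poly_Mapping.single j 1 = 0"
    hence "lk (m + Poly_Mapping.single j 1) j = 0" by simp
    thus False by (simp add: lookup_plus_single)
  qed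
  then show "lk (mderiv j (mconst c)) m = lk 0 m" by (simp add: lookup_mderiv lookup_mconst)
qed

lemma mconst_mvar: "mconst c * mvar i = Poly_Mapping.single (Poly_Mapping.single i 1) (c::'a::comm_ring_1)"
  by (simp add: mconst_def mvar_def mult_single)

lemma mderiv_lin: "mderiv j (mconst c * mvar i :: 'a::comm_ring_1 mpoly) = (if j = i then mconst c else 0)"
proof (rule poly_mapping_eqI)
  fix m :: "nat \<Rightarrow>\<^sub>0 nat"
  show "lk (mderiv j (mconst c * mvar i)) m = lk (if j = i then mconst c else 0) m"
  proof (cases "j = i")
    case True
    have "(Poly_Mapping.single i 1 = m + Poly_Mapping.single i (1::nat)) \<longleftrightarrow> m = 0"
      by (metis add_0 add_right_cancel)
    with True show ?thesis
      by (auto simp: lookup_mderiv mconst_mvar lookup_single when_def lookup_mconst)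
  next
    case False
    have "Poly_Mapping.single i 1 \<noteq> m + Poly_Mapping.single j (1::nat)"
    proof
      assume "Poly_Mapping.single i 1 = m + Poly_Mapping.single j (1::nat)"
      hence "lk (Poly_Mapping.single i (1::nat)) j = lk (m + Poly_Mapping.single j 1) j" by simp
      thus False using False by (simp add: lookup_plus_single lookup_single when_def)
    qed
    with False show ?thesis
      by (auto simp: lookup_mderiv mconst_mvar lookup_single when_def)
  qed
qed

lemma deriv_small:
  fixes p :: "'a::field_char_0 mpoly"
  assumes "mderiv i p \<in> Ig i k" shows "p - P0 i p \<in> Ig i k"
  unfolding Ig_def
proof (intro CollectI allI impI)
  fix m :: "nat \<Rightarrow>\<^sub>0 nat" assume m: "lk m i < k"
  show "lk (p - P0 i p) m = 0"
  proof (cases "lk m i = 0")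
    case True then show ?thesis by (simp add: lookup_minus lookup_P0)
  next
    case False
    define m' where "m' = m - Poly_Mapping.single i 1"
    have mm: "m = m' + Poly_Mapping.single i 1"
      by (rule poly_mapping_eqI) (use False in \<open>auto simp: m'_def lookup_add lookup_minus lookup_single when_def\<close>)
    have "lk m' i < k" using m mm by (simp add: lookup_plus_single)
    hence "lk (mderiv i p) m' = 0" using assms by (simp add: Ig_def)
    hence "of_nat (lk m' i + 1) * lk p m = (0::'a)" by (simp add: lookup_mderiv mm)
    hence "lk p m = 0" by (simp del: of_nat_Suc)
    then show ?thesis using False by (simp add: lookup_minus lookup_P0)
  qed
qed


lemma lookup_mconst_mult: "lk (mconst d * p) m = d * lk (p::'a::comm_ring_1 mpoly) m"
  using lookup_single_mult[of 0 d p m] by (simp add: mconst_def)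

theorem lemma7p1:
  fixes n :: nat and F :: "nat \<Rightarrow> 'a::field_char_0 mpoly"
    and i :: nat and c c' :: 'a and h :: "'a mpoly"
  assumes "keller_map n F"
    and "jacobian n F = transpose_mat (jacobian n F)"
    and "i < n"
    and "in_Kx n h"
    and "F i = mconst c' * mvar i + (mvar i)^2 * h + mconst c"
  shows "h = 0"
proof (rule ccontr)
  assume h0: "h \<noteq> 0"
  define M where "M = jacobian n F"
  have Mc: "M \<in> carrier_mat n n" by (simp add: M_def jacobian_def)
  have Me: "M $$ (r, s) = mderiv s (F r)" if "r < n" "s < n" for r s
    using that by (simp add: M_def jacobian_def)
  have sym: "M $$ (r, s) = M $$ (s, r)" if "r < n" "s < n" for r s
  proof -
    have "M $$ (r, s) = transpose_mat M $$ (r, s)" using assms(2) by (simp add: M_def)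
    also have "\<dots> = M $$ (s, r)" using that Mc by simp
    finally show ?thesis .
  qed
  obtain C where C: "C \<noteq> 0" "det M = mconst C" using assms(1) by (auto simp: keller_map_def M_def)
  define a where "a = Min ((\<lambda>m. lk m i) ` Poly_Mapping.keys h)"
  have kne: "Poly_Mapping.keys h \<noteq> {}" using h0 by simp
  have "a \<in> (\<lambda>m. lk m i) ` Poly_Mapping.keys h" unfolding a_def
    by (rule Min_in) (use kne in auto)
  then obtain m0 where m0: "m0 \<in> Poly_Mapping.keys h" "lk m0 i = a" by auto
  have hIg: "h \<in> Ig i a"
    unfolding Ig_def
  proof (intro CollectI allI impI)
    fix m :: "nat \<Rightarrow>\<^sub>0 nat" assume "lk m i < a"
    hence "m \<notin> Poly_Mapping.keys h" unfolding a_def using Min_le[of "(\<lambda>m. lk m i) ` Poly_Mapping.keys h"]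
      by fastforce
    thus "lk h m = 0" by (simp add: in_keys_iff)
  qed
  define k where "k = a + 2"
  define E where "E = Poly_Mapping.single (Poly_Mapping.single i (1::nat) + Poly_Mapping.single i 1) (1::'a)"
  define G where "G = (mvar i)^2 * h"
  have GE: "G = E * h" by (simp add: G_def E_def mvar_def power2_eq_square mult_single)
  have EIg: "E \<in> Ig i 2" by (auto simp: Ig_def E_def lookup_single when_def lookup_add)
  have GIg: "G \<in> Ig i k" using Ig_mult[OF EIg hIg] by (simp add: GE k_def add.commute)
  have Fi: "F i = mconst c' * mvar i + G + mconst c" using assms(5) by (simp add: G_def)
  have Mij: "M $$ (i, j) = mderiv j G" if "j < n" "j \<noteq> i" for j
    using that assms(3) by (simp add: Me Fi mderiv_add mderiv_lin mderiv_const)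
  have MijIg: "M $$ (i, j) \<in> Ig i k" if "j < n" "j \<noteq> i" for j
    using Mij[OF that] mderiv_Ig[OF that(2) GIg] by simp
  have Mii: "M $$ (i, i) = mconst c' + mderiv i G"
    using assms(3) by (simp add: Me Fi mderiv_add mderiv_lin mderiv_const)
  define M2 where "M2 = mat n n (\<lambda>(r,s). if r = i \<or> s = i then (if r = i \<and> s = i then M $$ (i,i) else 0) else M $$ (r,s))"
  have M2c: "M2 \<in> carrier_mat n n" by (simp add: M2_def)
  have A1: "det M - det M2 \<in> Ig i k"
  proof (rule det_cong[OF Mc M2c])
    fix r s assume rs: "r < n" "s < n"
    show "M $$ (r, s) - M2 $$ (r, s) \<in> Ig i k"
    proof (cases "r = i \<or> s = i")
      case False then show ?thesis using rs by (simp add: M2_def)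
    next
      case True
      show ?thesis
      proof (cases "r = i \<and> s = i")
        case True then show ?thesis using rs by (simp add: M2_def)
      next
        case False
        with \<open>r = i \<or> s = i\<close> have "(r = i \<and> s \<noteq> i) \<or> (s = i \<and> r \<noteq> i)" by auto
        then have "M $$ (r, s) \<in> Ig i k"
        proof
          assume "r = i \<and> s \<noteq> i" then show ?thesis using MijIg[of s] rs by simp
        next
          assume "s = i \<and> r \<noteq> i" then show ?thesis using MijIg[of r] sym[of r i] rs by simp
        qed
        then show ?thesis using rs False by (auto simp: M2_def)
      qed
    qed
  qed
  define M' where "M' = mat_delete M i i"
  have delM2: "mat_delete M2 i i = M'"
    unfolding M'_def mat_delete_def using Mc
    by (intro eq_matI) (auto simp: M2_def)
  have detM2: "det M2 = M $$ (i,i) * det M'"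
  proof -
    have "det M2 = (\<Sum>j<n. M2 $$ (i,j) * cofactor M2 i j)"
      by (rule laplace_expansion_row[OF M2c assms(3)])
    also have "\<dots> = M2 $$ (i,i) * cofactor M2 i i + (\<Sum>j\<in>{..<n}-{i}. M2 $$ (i,j) * cofactor M2 i j)"
      by (rule sum.remove) (use assms(3) in auto)
    also have "(\<Sum>j\<in>{..<n}-{i}. M2 $$ (i,j) * cofactor M2 i j) = 0"
      by (rule sum.neutral) (use assms(3) in \<open>auto simp: M2_def\<close>)
    also have "M2 $$ (i,i) = M $$ (i,i)" using assms(3) by (simp add: M2_def)
    also have "M $$ (i,i) * cofactor M2 i i + 0 = M $$ (i,i) * det M'"
      by (simp add: cofactor_def delM2 flip: mult_2)
    finally show ?thesis .
  qed
  have M'c: "M' \<in> carrier_mat (n-1) (n-1)" unfolding M'_def using mat_delete_carrier[OF Mc] .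
  have B1: "det M' - det (map_mat (P0 i) M') \<in> Ig i k"
  proof (rule det_cong[OF M'c])
    show "map_mat (P0 i) M' \<in> carrier_mat (n-1) (n-1)" using M'c by simp
    fix r' s' assume rs': "r' < n - 1" "s' < n - 1"
    define r where "r = (if r' < i then r' else Suc r')"
    define s where "s = (if s' < i then s' else Suc s')"
    have rs: "r < n" "s < n" "r \<noteq> i" "s \<noteq> i" using rs' by (auto simp: r_def s_def)
    have ent: "M' $$ (r', s') = M $$ (r, s)"
      using rs' Mc by (simp add: M'_def mat_delete_def r_def s_def)
    have "mderiv i (M $$ (r, s)) = mderiv s (mderiv i (F r))"
      using rs assms(3) by (simp add: Me mderiv_comm)
    also have "\<dots> = mderiv s (M $$ (i, r))"
      using rs assms(3) sym by (simp add: Me[symmetric])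
    also have "\<dots> \<in> Ig i k" using mderiv_Ig[OF rs(4) MijIg[OF rs(1) rs(3)]] .
    finally have "M $$ (r, s) - P0 i (M $$ (r, s)) \<in> Ig i k" by (rule deriv_small)
    then show "M' $$ (r', s') - map_mat (P0 i) M' $$ (r', s') \<in> Ig i k"
      using rs' M'c ent by simp
  qed
  define D0 where "D0 = P0 i (det M')"
  have D0free: "Free i D0" by (simp add: D0_def Free_P0)
  have B2: "det M' - D0 \<in> Ig i k"
    using B1 comm_ring_hom.hom_det[OF P0_hom, of i M'] by (simp add: D0_def)
  have main: "det M - M $$ (i,i) * D0 \<in> Ig i k"
  proof -
    have "det M - M $$ (i,i) * D0 = (det M - det M2) + M $$ (i,i) * (det M' - D0)"
      by (simp add: detM2 algebra_simps)
    also have "\<dots> \<in> Ig i k" by (intro Ig_add A1 Ig_multL B2)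
    finally show ?thesis .
  qed
  have k1: "1 \<le> k" by (simp add: k_def)
  have P0Mii: "P0 i (M $$ (i,i)) = mconst c'"
  proof (rule P0_unique)
    show "Free i (mconst c')" by (simp add: Free_def lookup_mconst)
    have "mderiv i G \<in> Ig i (a+1)" using mderiv_Ig_i[of G i "a+1"] GIg by (simp add: k_def)
    hence "mderiv i G \<in> Ig i 1" by (rule Ig_mono[rotated]) simp
    then show "M $$ (i, i) - mconst c' \<in> Ig i 1" by (simp add: Mii)
  qed
  have "mconst C = P0 i (det M)" using C by (simp add: P0_free Free_def lookup_mconst)
  also have "\<dots> = P0 i (M $$ (i,i) * D0)" by (rule P0_cong, rule Ig_mono[OF k1 main])
  also have "\<dots> = mconst c' * D0" by (simp add: P0_mult P0Mii P0_free[OF D0free])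
  finally have CD: "mconst C = mconst c' * D0" .
  have c'0: "c' \<noteq> 0"
  proof
    assume "c' = 0"
    hence "mconst C = (0::'a mpoly)" using CD by (simp add: mconst_def)
    hence "lk (mconst C) 0 = (0::'a)" by simp
    thus False using C by (simp add: lookup_mconst)
  qed
  have D0v: "D0 = mconst (C / c')"
  proof -
    have "mconst (1/c') * mconst C = mconst (1/c') * mconst c' * D0" using CD by (simp add: mult.assoc)
    thus ?thesis using c'0 by (simp add: mconst_def mult_single)
  qed
  define \<mu> where "\<mu> = m0 + Poly_Mapping.single i (1::nat)"
  have mui: "lk \<mu> i = a + 1" by (simp add: \<mu>_def lookup_plus_single m0)
  have "lk (det M - M $$ (i,i) * D0) \<mu> = 0" using main mui by (simp add: Ig_def k_def)
  moreover have "lk (det M) \<mu> = 0"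
  proof -
    have "\<mu> \<noteq> 0" using mui by auto
    thus ?thesis using C by (simp add: lookup_mconst)
  qed
  ultimately have "lk (M $$ (i,i) * D0) \<mu> = 0" by (simp add: lookup_minus)
  hence "(C / c') * lk (M $$ (i,i)) \<mu> = 0" by (simp add: D0v mult.commute lookup_mconst_mult)
  hence z: "lk (M $$ (i,i)) \<mu> = 0" using C c'0 by simp
  have "lk (M $$ (i,i)) \<mu> = of_nat (a + 2) * lk h m0"
  proof -
    have "\<mu> \<noteq> 0" using mui by auto
    hence "lk (M $$ (i,i)) \<mu> = lk (mderiv i G) \<mu>" by (simp add: Mii lookup_add lookup_mconst)
    also have "\<dots> = of_nat (a + 2) * lk G (\<mu> + Poly_Mapping.single i 1)"
      by (simp add: lookup_mderiv mui)
    also have "\<mu> + Poly_Mapping.single i 1 = (Poly_Mapping.single i (1::nat) + Poly_Mapping.single i 1) + m0"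
      by (simp add: \<mu>_def add_ac)
    also have "lk G \<dots> = lk h m0" by (simp add: GE E_def lookup_single_mult)
    finally show ?thesis .
  qed
  moreover have "of_nat (a + 2) \<noteq> (0::'a)" by (simp only: of_nat_eq_0_iff)
  ultimately have "lk h m0 = 0" using z by (metis mult_eq_0_iff)
  thus False using m0(1) by (simp add: in_keys_iff)
qed

end
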